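(* Let $\Omega\subset\mathbb{R}^d$ ($d=2,3$) be a bounded domain, let $\eta>0$, $\tau_s>0$, $\gamma>0$. For a matrix $\mathbf{A}\in\mathbb{R}^{d\times d}$ set $|\mathbf{A}|_\gamma:=\max\{\tau_s,\gamma|\mathbf{A}|\}$ (with $|\cdot|$ the Frobenius norm), and define $\mu(t):=2\eta+\tau_s\gamma\frac{1}{t}$ for $t>0$. Then there exist constants $C_1,C_2>0$ such that for all $d\times d$ tensor fields $\boldsymbol{\theta},\boldsymbol{\vartheta}\in \mathbb{L}^p(\Omega)$, $$|\mu(|\boldsymbol{\theta}|_{\gamma})\boldsymbol{\theta}-\mu(|\boldsymbol{\vartheta}|_{\gamma})\boldsymbol{\vartheta}| \leq C_1|\boldsymbol{\theta}-\boldsymbol{\vartheta}|$$ and $$C_2|\boldsymbol{\theta}-\boldsymbol{\vartheta}|^2 \leq (\mu(|\boldsymbol{\theta}|_{\gamma})\boldsymbol{\theta}-\mu(|\boldsymbol{\vartheta}|_{\gamma})\boldsymbol{\vartheta}):(\boldsymbol{\theta}-\boldsymbol{\vartheta})$$ almost everywhere in $\Omega$.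
   Context: $\mathbb{L}^p(\Omega)$ denotes the space of $d\times d$ tensor fields on $\Omega$ with components in $L^p(\Omega)$; $\mathbf{A}:\mathbf{B}=\sum_{i,j}A_{ij}B_{ij}$ is the Frobenius inner product. $\eta$ is the viscosity, $\tau_s$ the yield stress and $\gamma$ a regularization parameter; the constants $C_1,C_2$ may depend on $\eta,\tau_s,\gamma$ but not on $\boldsymbol{\theta},\boldsymbol{\vartheta}$ or $x$. *)

theory Defs
  imports "HOL-Analysis.Analysis"
begin

text \<open>Tensors are elements of real^'d^'d; norm is the Frobenius norm and inner
  (the bullet operator) is the Frobenius inner product.\<close>

definition gnorm :: "real \<Rightarrow> real \<Rightarrow> real^'d^'d \<Rightarrow> real" where
  "gnorm tau_s gam A = max tau_s (gam * norm A)"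

definition mu :: "real \<Rightarrow> real \<Rightarrow> real \<Rightarrow> real \<Rightarrow> real" where
  "mu eta tau_s gam t = 2 * eta + tau_s * gam * (1 / t)"

definition in_Lp :: "real \<Rightarrow> (real^'d) set \<Rightarrow> (real^'d \<Rightarrow> real^'d^'d) \<Rightarrow> bool" where
  "in_Lp p \<Omega> f \<longleftrightarrow> f \<in> borel_measurable (lebesgue_on \<Omega>)
      \<and> integrable (lebesgue_on \<Omega>) (\<lambda>x. norm (f x) powr p)"

end

theory Submission
  imports Defs
begin

definition PP :: "real \<Rightarrow> real \<Rightarrow> 'a::real_inner \<Rightarrow> 'a" where
  "PP ts g A = (ts / max ts (g * norm A)) *\<^sub>R A"

lemma PP_norm:
  fixes A :: "'a::real_inner"
  assumes "ts > 0" "g > 0"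
  shows "norm (PP ts g A) \<le> ts / g"
proof -
  have m: "max ts (g * norm A) > 0" using assms by linarith
  have "norm (PP ts g A) = ts * norm A / max ts (g * norm A)"
    unfolding PP_def using m assms by (simp add: abs_of_pos)
  also have "\<dots> \<le> ts / g"
  proof -
    have "ts * (g * norm A) \<le> ts * max ts (g * norm A)"
      using assms by (intro mult_left_mono) auto
    then have "g * (ts * norm A) \<le> ts * max ts (g * norm A)" by (simp add: algebra_simps)
    then show ?thesis using m assms by (simp add: divide_le_eq le_divide_eq mult.commute)
  qed
  finally show ?thesis .
qed

lemma PP_var:
  fixes A B :: "'a::real_inner"
  assumes "ts > 0" "g > 0"
  shows "(A - PP ts g A) \<bullet> (PP ts g B - PP ts g A) \<le> 0"
proof (cases "g * norm A \<le> ts")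
  case True
  then have "PP ts g A = A" unfolding PP_def using assms by simp
  then show ?thesis by simp
next
  case False
  define r where "r = ts / g"
  have r0: "r > 0" using assms unfolding r_def by simp
  have gA: "g * norm A > ts" using False by linarith
  have nA: "norm A > 0"
  proof (rule ccontr)
    assume "\<not> norm A > 0"
    then have "norm A = 0" using norm_ge_zero[of A] by linarith
    then show False using gA assms by simp
  qed
  have mx: "max ts (g * norm A) = g * norm A" using gA by simp
  have rA: "r \<le> norm A" unfolding r_def using gA assms by (simp add: pos_divide_le_eq mult.commute)
  have cc: "ts / (g * norm A) = r / norm A" unfolding r_def by simp
  have pa: "PP ts g A = (r / norm A) *\<^sub>R A" unfolding PP_def mx cc ..
  have npa: "norm (PP ts g A) = r" unfolding pa using nA r0 by simp
  have AP: "A - PP ts g A = (norm A / r - 1) *\<^sub>R PP ts g A"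
  proof -
    have "(norm A / r - 1) *\<^sub>R PP ts g A = ((norm A / r - 1) * (r / norm A)) *\<^sub>R A"
      unfolding pa by simp
    also have "(norm A / r - 1) * (r / norm A) = 1 - r / norm A"
      using nA r0 by (simp add: algebra_simps)
    finally show ?thesis unfolding pa by (simp add: scaleR_diff_left)
  qed
  have k: "norm A / r - 1 \<ge> 0" using rA r0 by simp
  have sq: "PP ts g A \<bullet> PP ts g A = r^2" by (metis npa power2_norm_eq_inner)
  have "PP ts g A \<bullet> (PP ts g B - PP ts g A) = PP ts g A \<bullet> PP ts g B - r^2"
    using sq by (simp add: inner_diff_right)
  also have "\<dots> \<le> r * norm (PP ts g B) - r^2"
    using Cauchy_Schwarz_ineq2[of "PP ts g A" "PP ts g B"] npa by simp
  also have "\<dots> \<le> 0"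
  proof -
    have "r * norm (PP ts g B) \<le> r * r"
      using PP_norm[OF assms, of B] r0 unfolding r_def by (intro mult_left_mono) auto
    then show ?thesis by (simp add: power2_eq_square)
  qed
  finally have "PP ts g A \<bullet> (PP ts g B - PP ts g A) \<le> 0" .
  then show ?thesis unfolding AP inner_scaleR_left using k
    by (simp add: mult_nonneg_nonpos)
qed

lemma PP_firm:
  fixes A B :: "'a::real_inner"
  assumes "ts > 0" "g > 0"
  shows "(norm (PP ts g A - PP ts g B))^2 \<le> (PP ts g A - PP ts g B) \<bullet> (A - B)"
proof -
  have 1: "(A - PP ts g A) \<bullet> (PP ts g B - PP ts g A) \<le> 0" by (rule PP_var[OF assms])
  have 2: "(B - PP ts g B) \<bullet> (PP ts g A - PP ts g B) \<le> 0" by (rule PP_var[OF assms])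
  have "(PP ts g A - PP ts g B) \<bullet> (A - B) - (norm (PP ts g A - PP ts g B))^2
     = - ((A - PP ts g A) \<bullet> (PP ts g B - PP ts g A)) - ((B - PP ts g B) \<bullet> (PP ts g A - PP ts g B))"
    by (simp add: power2_norm_eq_inner algebra_simps inner_commute)
  then show ?thesis using 1 2 by linarith
qed

lemma PP_lip:
  fixes A B :: "'a::real_inner"
  assumes "ts > 0" "g > 0"
  shows "norm (PP ts g A - PP ts g B) \<le> norm (A - B)"
proof -
  have "(norm (PP ts g A - PP ts g B))^2 \<le> norm (PP ts g A - PP ts g B) * norm (A - B)"
    using PP_firm[OF assms, of A B] Cauchy_Schwarz_ineq2[of "PP ts g A - PP ts g B" "A - B"]
    by linarith
  then have h: "(norm (PP ts g A - PP ts g B))^2 \<le> norm (PP ts g A - PP ts g B) * norm (A - B)" .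
  show ?thesis
  proof (cases "norm (PP ts g A - PP ts g B) = 0")
    case True then show ?thesis by simp
  next
    case False
    then have "norm (PP ts g A - PP ts g B) > 0" by simp
    then show ?thesis using h by (simp add: power2_eq_square)
  qed
qed

lemma PP_mono:
  fixes A B :: "'a::real_inner"
  assumes "ts > 0" "g > 0"
  shows "0 \<le> (PP ts g A - PP ts g B) \<bullet> (A - B)"
  using PP_firm[OF assms, of A B] by (meson order_trans zero_le_power2)

lemma F_eq:
  fixes A :: "real^'d^'d"
  assumes "ts > 0" "g > 0"
  shows "mu eta ts g (gnorm ts g A) *\<^sub>R A = (2*eta) *\<^sub>R A + g *\<^sub>R PP ts g A"
  unfolding mu_def gnorm_def PP_def by (simp add: scaleR_add_left)

theorem lemma2:
  fixes \<Omega> :: "(real^'d) set" and eta tau_s gam p :: real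
  assumes "CARD('d) = 2 \<or> CARD('d) = 3"
    and "open \<Omega>" and "connected \<Omega>" and "bounded \<Omega>" and "\<Omega> \<noteq> {}"
    and "eta > 0" and "tau_s > 0" and "gam > 0" and "p \<ge> 1"
  shows "\<exists>C1 C2. C1 > 0 \<and> C2 > 0 \<and>
    (\<forall>\<theta> \<phi> :: real^'d \<Rightarrow> real^'d^'d. in_Lp p \<Omega> \<theta> \<and> in_Lp p \<Omega> \<phi> \<longrightarrow>
      (AE x in lebesgue_on \<Omega>.
         norm (mu eta tau_s gam (gnorm tau_s gam (\<theta> x)) *\<^sub>R \<theta> x
               - mu eta tau_s gam (gnorm tau_s gam (\<phi> x)) *\<^sub>R \<phi> x)
           \<le> C1 * norm (\<theta> x - \<phi> x)
       \<and> C2 * (norm (\<theta> x - \<phi> x))^2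
           \<le> (mu eta tau_s gam (gnorm tau_s gam (\<theta> x)) *\<^sub>R \<theta> x
               - mu eta tau_s gam (gnorm tau_s gam (\<phi> x)) *\<^sub>R \<phi> x) \<bullet> (\<theta> x - \<phi> x)))"
proof -
  have ts: "tau_s > 0" and g: "gam > 0" and e: "eta > 0" using assms by auto
  have pw: "norm (mu eta tau_s gam (gnorm tau_s gam A) *\<^sub>R A
               - mu eta tau_s gam (gnorm tau_s gam B) *\<^sub>R B)
           \<le> (2*eta + gam) * norm (A - B)
       \<and> (2*eta) * (norm (A - B))^2
           \<le> (mu eta tau_s gam (gnorm tau_s gam A) *\<^sub>R A
               - mu eta tau_s gam (gnorm tau_s gam B) *\<^sub>R B) \<bullet> (A - B)"
    for A B :: "real^'d^'d"
  proof -
    have D: "mu eta tau_s gam (gnorm tau_s gam A) *\<^sub>R A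
               - mu eta tau_s gam (gnorm tau_s gam B) *\<^sub>R B
             = (2*eta) *\<^sub>R (A - B) + gam *\<^sub>R (PP tau_s gam A - PP tau_s gam B)"
      unfolding F_eq[OF ts g] by (simp add: algebra_simps)
    have L: "norm ((2*eta) *\<^sub>R (A - B) + gam *\<^sub>R (PP tau_s gam A - PP tau_s gam B))
        \<le> (2*eta) * norm (A - B) + gam * norm (A - B)"
    proof -
      have "norm ((2*eta) *\<^sub>R (A - B) + gam *\<^sub>R (PP tau_s gam A - PP tau_s gam B))
          \<le> norm ((2*eta) *\<^sub>R (A - B)) + norm (gam *\<^sub>R (PP tau_s gam A - PP tau_s gam B))"
        by (rule norm_triangle_ineq)
      also have "\<dots> = (2*eta) * norm (A - B) + gam * norm (PP tau_s gam A - PP tau_s gam B)"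
        using e g by simp
      also have "\<dots> \<le> (2*eta) * norm (A - B) + gam * norm (A - B)"
        using PP_lip[OF ts g, of A B] g by simp
      finally show ?thesis .
    qed
    have M: "((2*eta) *\<^sub>R (A - B) + gam *\<^sub>R (PP tau_s gam A - PP tau_s gam B)) \<bullet> (A - B)
       = (2*eta) * (norm (A - B))^2 + gam * ((PP tau_s gam A - PP tau_s gam B) \<bullet> (A - B))"
      by (simp add: inner_add_left power2_norm_eq_inner)
    have "0 \<le> gam * ((PP tau_s gam A - PP tau_s gam B) \<bullet> (A - B))"
      using PP_mono[OF ts g, of A B] g by simp
    then show ?thesis unfolding D M using L by (simp add: distrib_right)
  qed
  show ?thesis
    apply (rule exI[of _ "2*eta + gam"], rule exI[of _ "2*eta"])
    using e g pw by simp
qed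

end
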